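(* Let $\mathbf{C}$ be an adhesive category. Consider a commutative diagram consisting of two vertically stacked squares: square (3) with morphisms $z:Z'\to Z$, $w:Z\to Y$, $w':Z'\to Y'$, $y:Y'\to Y$ satisfying $w\circ z=y\circ w'$, and square (4) with morphisms $y:Y'\to Y$, $v:Y\to X$, $v':Y'\to X'$, $x:X'\to X$ satisfying $v\circ y=x\circ v'$. Suppose that $z,w,w',y,v',x$ are monomorphisms, that $v\circ w$ is a monomorphism, that square (3) is a pushout (i.e. $(Y,w,y)$ is a pushout of $Z\xleftarrow{z}Z'\xrightarrow{w'}Y'$), and that the composite square (3)+(4) is an FPC, i.e. $(x,\ v'\circ w')$ is an FPC of $(v\circ w,\ z)$. Then square (4) is an FPC, i.e. $(x,v')$ is an FPC of $(v,y)$, and $v$ is a monomorphism.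
   Context: A category is adhesive if it has pushouts along monomorphisms, has pullbacks, and pushouts along monomorphisms are van Kampen squares. Final pullback complement (FPC): given morphisms $a:A\to B$ and $c:B\to C$, a pair $(d:D\to C,\ b:A\to D)$ is an FPC of $(c,a)$ if $c\circ a=d\circ b$, this square is a pullback (i.e. $(A,a,b)$ is a pullback of $(c,d)$), and for all morphisms $x_0:E\to B$, $y_0:E\to F$, $z_0:F\to C$, $w_0:E\to A$ such that $(E,x_0,y_0)$ is a pullback of $(c,z_0)$ and $a\circ w_0=x_0$, there exists a unique $w^*:F\to D$ with $d\circ w^*=z_0$ and $w^*\circ y_0=b\circ w_0$. *)

theory Defs
  imports Main
begin

text \<open>A (small) category given explicitly: objects, arrows, domain, codomain,
identities and composition. \<open>Comp C g f\<close> denotes \<open>g \<circ> f\<close> (first f, then g).\<close>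

record ('o, 'a) cat =
  Ob :: "'o set"
  Ar :: "'a set"
  Dom :: "'a \<Rightarrow> 'o"
  Cod :: "'a \<Rightarrow> 'o"
  Id :: "'o \<Rightarrow> 'a"
  Comp :: "'a \<Rightarrow> 'a \<Rightarrow> 'a"

definition arr :: "('o, 'a) cat \<Rightarrow> 'a \<Rightarrow> 'o \<Rightarrow> 'o \<Rightarrow> bool" where
  "arr C f X Y \<longleftrightarrow> f \<in> Ar C \<and> Dom C f = X \<and> Cod C f = Y"

definition category :: "('o, 'a) cat \<Rightarrow> bool" where
  "category C \<longleftrightarrow>
     (\<forall>f \<in> Ar C. Dom C f \<in> Ob C \<and> Cod C f \<in> Ob C) \<and>
     (\<forall>X \<in> Ob C. arr C (Id C X) X X) \<and>
     (\<forall>f g. f \<in> Ar C \<and> g \<in> Ar C \<and> Cod C f = Dom C g \<longrightarrow>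
        arr C (Comp C g f) (Dom C f) (Cod C g)) \<and>
     (\<forall>f \<in> Ar C. Comp C f (Id C (Dom C f)) = f \<and> Comp C (Id C (Cod C f)) f = f) \<and>
     (\<forall>f g h. f \<in> Ar C \<and> g \<in> Ar C \<and> h \<in> Ar C \<and> Cod C f = Dom C g \<and> Cod C g = Dom C h \<longrightarrow>
        Comp C h (Comp C g f) = Comp C (Comp C h g) f)"

definition mono :: "('o, 'a) cat \<Rightarrow> 'a \<Rightarrow> bool" where
  "mono C m \<longleftrightarrow> m \<in> Ar C \<and>
     (\<forall>g h. g \<in> Ar C \<and> h \<in> Ar C \<and> Cod C g = Dom C m \<and> Cod C h = Dom C m \<and>
        Dom C g = Dom C h \<and> Comp C m g = Comp C m h \<longrightarrow> g = h)"

text \<open>\<open>pullback C c d a b\<close>: \<open>(A, a, b)\<close> is a pullback of the cospan \<open>(c, d)\<close>,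
  where \<open>c : B \<rightarrow> T\<close>, \<open>d : D \<rightarrow> T\<close>, \<open>a : A \<rightarrow> B\<close>, \<open>b : A \<rightarrow> D\<close>.\<close>
definition pullback :: "('o, 'a) cat \<Rightarrow> 'a \<Rightarrow> 'a \<Rightarrow> 'a \<Rightarrow> 'a \<Rightarrow> bool" where
  "pullback C c d a b \<longleftrightarrow>
     c \<in> Ar C \<and> d \<in> Ar C \<and> a \<in> Ar C \<and> b \<in> Ar C \<and>
     Cod C c = Cod C d \<and> Cod C a = Dom C c \<and> Cod C b = Dom C d \<and> Dom C a = Dom C b \<and>
     Comp C c a = Comp C d b \<and>
     (\<forall>p q. p \<in> Ar C \<and> q \<in> Ar C \<and> Cod C p = Dom C c \<and> Cod C q = Dom C d \<and>
        Dom C p = Dom C q \<and> Comp C c p = Comp C d q \<longrightarrow>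
        (\<exists>!u. arr C u (Dom C p) (Dom C a) \<and> Comp C a u = p \<and> Comp C b u = q))"

text \<open>\<open>pushout C f g h k\<close>: \<open>(Q, h, k)\<close> is a pushout of the span \<open>B \<leftarrow>f A \<rightarrow>g D\<close>,
  where \<open>h : B \<rightarrow> Q\<close>, \<open>k : D \<rightarrow> Q\<close> and \<open>h \<circ> f = k \<circ> g\<close>.\<close>
definition pushout :: "('o, 'a) cat \<Rightarrow> 'a \<Rightarrow> 'a \<Rightarrow> 'a \<Rightarrow> 'a \<Rightarrow> bool" where
  "pushout C f g h k \<longleftrightarrow>
     f \<in> Ar C \<and> g \<in> Ar C \<and> h \<in> Ar C \<and> k \<in> Ar C \<and>
     Dom C f = Dom C g \<and> Dom C h = Cod C f \<and> Dom C k = Cod C g \<and> Cod C h = Cod C k \<and>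
     Comp C h f = Comp C k g \<and>
     (\<forall>p q. p \<in> Ar C \<and> q \<in> Ar C \<and> Dom C p = Cod C f \<and> Dom C q = Cod C g \<and>
        Cod C p = Cod C q \<and> Comp C p f = Comp C q g \<longrightarrow>
        (\<exists>!u. arr C u (Cod C h) (Cod C p) \<and> Comp C u h = p \<and> Comp C u k = q))"

definition has_pullbacks :: "('o, 'a) cat \<Rightarrow> bool" where
  "has_pullbacks C \<longleftrightarrow>
     (\<forall>c d. c \<in> Ar C \<and> d \<in> Ar C \<and> Cod C c = Cod C d \<longrightarrow> (\<exists>a b. pullback C c d a b))"

definition has_pushouts_along_monos :: "('o, 'a) cat \<Rightarrow> bool" where
  "has_pushouts_along_monos C \<longleftrightarrow>
     (\<forall>f g. f \<in> Ar C \<and> g \<in> Ar C \<and> Dom C f = Dom C g \<and> (mono C f \<or> mono C g) \<longrightarrow>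
        (\<exists>h k. pushout C f g h k))"

text \<open>The bottom face is the pushout square
  \<open>h \<circ> f = k \<circ> g\<close> (\<open>f : A \<rightarrow> B\<close>, \<open>g : A \<rightarrow> D\<close>, \<open>h : B \<rightarrow> Q\<close>, \<open>k : D \<rightarrow> Q\<close>).\<close>
definition van_kampen :: "('o, 'a) cat \<Rightarrow> 'a \<Rightarrow> 'a \<Rightarrow> 'a \<Rightarrow> 'a \<Rightarrow> bool" where
  "van_kampen C f g h k \<longleftrightarrow> pushout C f g h k \<and>
     (\<forall>f' g' h' k' a b c d.
        arr C a (Dom C f') (Dom C f) \<and> arr C b (Cod C f') (Cod C f) \<and>
        arr C c (Cod C g') (Cod C g) \<and> arr C d (Cod C h') (Cod C h) \<and>
        f' \<in> Ar C \<and> g' \<in> Ar C \<and> h' \<in> Ar C \<and> k' \<in> Ar C \<and>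
        Dom C g' = Dom C f' \<and> Dom C h' = Cod C f' \<and> Dom C k' = Cod C g' \<and>
        Cod C k' = Cod C h' \<and>
        Comp C h' f' = Comp C k' g' \<and>
        Comp C f a = Comp C b f' \<and> Comp C g a = Comp C c g' \<and>
        Comp C h b = Comp C d h' \<and> Comp C k c = Comp C d k' \<and>
        pullback C f b a f' \<and> pullback C g c a g' \<longrightarrow>
        (pushout C f' g' h' k' \<longleftrightarrow> pullback C h d b h' \<and> pullback C k d c k'))"

definition adhesive :: "('o, 'a) cat \<Rightarrow> bool" where
  "adhesive C \<longleftrightarrow> category C \<and> has_pullbacks C \<and> has_pushouts_along_monos C \<and>
     (\<forall>f g h k. pushout C f g h k \<and> (mono C f \<or> mono C g) \<longrightarrow> van_kampen C f g h k)"

text \<open>Final pullback complement: \<open>fpc C c a d b\<close> means \<open>(d, b)\<close> is an FPC of \<open>(c, a)\<close>,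
  for \<open>a : A \<rightarrow> B\<close>, \<open>c : B \<rightarrow> T\<close>, \<open>d : D \<rightarrow> T\<close>, \<open>b : A \<rightarrow> D\<close>.\<close>
definition fpc :: "('o, 'a) cat \<Rightarrow> 'a \<Rightarrow> 'a \<Rightarrow> 'a \<Rightarrow> 'a \<Rightarrow> bool" where
  "fpc C c a d b \<longleftrightarrow>
     a \<in> Ar C \<and> c \<in> Ar C \<and> d \<in> Ar C \<and> b \<in> Ar C \<and>
     Cod C a = Dom C c \<and> Cod C d = Cod C c \<and> Dom C b = Dom C a \<and> Cod C b = Dom C d \<and>
     Comp C c a = Comp C d b \<and>
     pullback C c d a b \<and>
     (\<forall>x0 y0 z0 w0.
        arr C x0 (Dom C x0) (Cod C a) \<and> arr C y0 (Dom C x0) (Cod C y0) \<and>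
        arr C z0 (Cod C y0) (Cod C c) \<and> arr C w0 (Dom C x0) (Dom C a) \<and>
        pullback C c z0 x0 y0 \<and> Comp C a w0 = x0 \<longrightarrow>
        (\<exists>!ws. arr C ws (Cod C y0) (Dom C d) \<and> Comp C d ws = z0 \<and>
               Comp C ws y0 = Comp C b w0))"

end

theory Submission
  imports Defs
begin


locale cat =
  fixes C :: "('o, 'a) cat"
  assumes category: "category C"
begin

abbreviation comp (infixr "\<cdot>" 55) where "g \<cdot> f \<equiv> Comp C g f"

lemma comp_in [simp]: "f \<in> Ar C \<Longrightarrow> g \<in> Ar C \<Longrightarrow> Cod C f = Dom C g \<Longrightarrow> g \<cdot> f \<in> Ar C"
  using category unfolding category_def arr_def by blast
lemma dom_comp [simp]: "f \<in> Ar C \<Longrightarrow> g \<in> Ar C \<Longrightarrow> Cod C f = Dom C g \<Longrightarrow> Dom C (g \<cdot> f) = Dom C f"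
  using category unfolding category_def arr_def by blast
lemma cod_comp [simp]: "f \<in> Ar C \<Longrightarrow> g \<in> Ar C \<Longrightarrow> Cod C f = Dom C g \<Longrightarrow> Cod C (g \<cdot> f) = Cod C g"
  using category unfolding category_def arr_def by blast
lemma AL: "f \<in> Ar C \<Longrightarrow> g \<in> Ar C \<Longrightarrow> h \<in> Ar C \<Longrightarrow> Cod C f = Dom C g \<Longrightarrow> Cod C g = Dom C h \<Longrightarrow>
  h \<cdot> (g \<cdot> f) = (h \<cdot> g) \<cdot> f"
  using category unfolding category_def by blast
lemma AR: "f \<in> Ar C \<Longrightarrow> g \<in> Ar C \<Longrightarrow> h \<in> Ar C \<Longrightarrow> Cod C f = Dom C g \<Longrightarrow> Cod C g = Dom C h \<Longrightarrow>
  (h \<cdot> g) \<cdot> f = h \<cdot> (g \<cdot> f)"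
  using AL by simp
lemma id_in [simp]: "X \<in> Ob C \<Longrightarrow> Id C X \<in> Ar C"
  using category unfolding category_def arr_def by blast
lemma dom_id [simp]: "X \<in> Ob C \<Longrightarrow> Dom C (Id C X) = X"
  using category unfolding category_def arr_def by blast
lemma cod_id [simp]: "X \<in> Ob C \<Longrightarrow> Cod C (Id C X) = X"
  using category unfolding category_def arr_def by blast
lemma dom_ob [simp]: "f \<in> Ar C \<Longrightarrow> Dom C f \<in> Ob C"
  using category unfolding category_def by blast
lemma cod_ob [simp]: "f \<in> Ar C \<Longrightarrow> Cod C f \<in> Ob C"
  using category unfolding category_def by blast
lemma comp_id_r [simp]: "f \<in> Ar C \<Longrightarrow> Dom C f = X \<Longrightarrow> f \<cdot> Id C X = f"
  using category unfolding category_def by blast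
lemma comp_id_l [simp]: "f \<in> Ar C \<Longrightarrow> Cod C f = X \<Longrightarrow> Id C X \<cdot> f = f"
  using category unfolding category_def by blast

lemma pbD: "pullback C c d a b \<Longrightarrow> a \<in> Ar C \<and> b \<in> Ar C \<and> c \<in> Ar C \<and> d \<in> Ar C \<and>
   Cod C c = Cod C d \<and> Cod C a = Dom C c \<and> Cod C b = Dom C d \<and> Dom C a = Dom C b \<and> c \<cdot> a = d \<cdot> b"
  unfolding pullback_def by blast
lemma poD: "pushout C f g h k \<Longrightarrow> f \<in> Ar C \<and> g \<in> Ar C \<and> h \<in> Ar C \<and> k \<in> Ar C \<and>
     Dom C f = Dom C g \<and> Dom C h = Cod C f \<and> Dom C k = Cod C g \<and> Cod C h = Cod C k \<and> h \<cdot> f = k \<cdot> g"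
  unfolding pushout_def by blast

lemma pb_ex:
  assumes "pullback C c d a b" "p \<in> Ar C" "q \<in> Ar C" "Cod C p = Dom C c" "Cod C q = Dom C d"
    "Dom C p = Dom C q" "c \<cdot> p = d \<cdot> q"
  obtains u where "u \<in> Ar C" "Dom C u = Dom C p" "Cod C u = Dom C a" "a \<cdot> u = p" "b \<cdot> u = q"
  using assms unfolding pullback_def arr_def by blast

lemma pb_univ:
  assumes "pullback C c d a b" "p \<in> Ar C" "q \<in> Ar C" "Cod C p = Dom C c" "Cod C q = Dom C d"
    "Dom C p = Dom C q" "c \<cdot> p = d \<cdot> q"
  shows "\<exists>!u. arr C u (Dom C p) (Dom C a) \<and> a \<cdot> u = p \<and> b \<cdot> u = q"
  using assms unfolding pullback_def by blast

lemma pb_uniq: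
  assumes "pullback C c d a b" "u1 \<in> Ar C" "u2 \<in> Ar C" "Cod C u1 = Dom C a" "Cod C u2 = Dom C a"
    "Dom C u1 = Dom C u2" "a \<cdot> u1 = a \<cdot> u2" "b \<cdot> u1 = b \<cdot> u2"
  shows "u1 = u2"
proof -
  note P = pbD[OF assms(1)]
  have e: "c \<cdot> (a \<cdot> u1) = d \<cdot> (b \<cdot> u1)" using P assms by (simp add: AL)
  have U: "\<exists>!u. arr C u (Dom C (a \<cdot> u1)) (Dom C a) \<and> a \<cdot> u = a \<cdot> u1 \<and> b \<cdot> u = b \<cdot> u1"
    by (rule pb_univ[OF assms(1)]) (use e P assms in simp_all)
  have A1: "arr C u1 (Dom C (a \<cdot> u1)) (Dom C a) \<and> a \<cdot> u1 = a \<cdot> u1 \<and> b \<cdot> u1 = b \<cdot> u1"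
    using P assms by (simp add: arr_def)
  have A2: "arr C u2 (Dom C (a \<cdot> u1)) (Dom C a) \<and> a \<cdot> u2 = a \<cdot> u1 \<and> b \<cdot> u2 = b \<cdot> u1"
    using P assms by (simp add: arr_def)
  show ?thesis using U A1 A2 by blast
qed

lemma po_ex:
  assumes "pushout C f g h k" "p \<in> Ar C" "q \<in> Ar C" "Dom C p = Cod C f" "Dom C q = Cod C g"
    "Cod C p = Cod C q" "p \<cdot> f = q \<cdot> g"
  obtains u where "u \<in> Ar C" "Dom C u = Cod C h" "Cod C u = Cod C p" "u \<cdot> h = p" "u \<cdot> k = q"
  using assms unfolding pushout_def arr_def by blast

lemma po_univ:
  assumes "pushout C f g h k" "p \<in> Ar C" "q \<in> Ar C" "Dom C p = Cod C f" "Dom C q = Cod C g"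
    "Cod C p = Cod C q" "p \<cdot> f = q \<cdot> g"
  shows "\<exists>!u. arr C u (Cod C h) (Cod C p) \<and> u \<cdot> h = p \<and> u \<cdot> k = q"
  using assms unfolding pushout_def by blast

lemma po_epi:
  assumes "pushout C f g h k" "p \<in> Ar C" "q \<in> Ar C" "Dom C p = Cod C h" "Dom C q = Cod C h"
    "Cod C p = Cod C q" "p \<cdot> h = q \<cdot> h" "p \<cdot> k = q \<cdot> k"
  shows "p = q"
proof -
  note P = poD[OF assms(1)]
  have e: "(p \<cdot> h) \<cdot> f = (p \<cdot> k) \<cdot> g" using P assms by (simp add: AR)
  have U: "\<exists>!u. arr C u (Cod C h) (Cod C (p \<cdot> h)) \<and> u \<cdot> h = p \<cdot> h \<and> u \<cdot> k = p \<cdot> k"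
    by (rule po_univ[OF assms(1)]) (use e P assms in simp_all)
  have A1: "arr C p (Cod C h) (Cod C (p \<cdot> h)) \<and> p \<cdot> h = p \<cdot> h \<and> p \<cdot> k = p \<cdot> k"
    using P assms by (simp add: arr_def)
  have A2: "arr C q (Cod C h) (Cod C (p \<cdot> h)) \<and> q \<cdot> h = p \<cdot> h \<and> q \<cdot> k = p \<cdot> k"
    using P assms by (simp add: arr_def)
  show ?thesis using U A1 A2 by blast
qed

lemma mono_cancel:
  assumes "mono C m" "g \<in> Ar C" "h \<in> Ar C" "Cod C g = Dom C m" "Cod C h = Dom C m"
    "Dom C g = Dom C h" "m \<cdot> g = m \<cdot> h"
  shows "g = h"
  using assms unfolding mono_def by blast

end

context cat begin

lemma pb_sym: "pullback C c d a b \<Longrightarrow> pullback C d c b a"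
  unfolding pullback_def by (metis (no_types, lifting))

lemma paste:
  assumes pb1: "pullback C c d a b" and pb2: "pullback C a k e m"
  shows "pullback C (c \<cdot> k) d m (b \<cdot> e)"
proof -
  note P1 = pbD[OF pb1] and P2 = pbD[OF pb2]
  have sq: "(c \<cdot> k) \<cdot> m = d \<cdot> (b \<cdot> e)"
  proof -
    have "(c \<cdot> k) \<cdot> m = c \<cdot> (k \<cdot> m)" using P1 P2 by (simp add: AR)
    also have "\<dots> = c \<cdot> (a \<cdot> e)" using P2 by simp
    also have "\<dots> = (c \<cdot> a) \<cdot> e" by (rule AL) (use P1 P2 in simp_all)
    also have "\<dots> = (d \<cdot> b) \<cdot> e" using P1 by simp
    also have "\<dots> = d \<cdot> (b \<cdot> e)" using P1 P2 by (simp add: AR)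
    finally show ?thesis .
  qed
  show ?thesis
    unfolding pullback_def
  proof (intro conjI allI impI)
    fix p q
    assume H: "p \<in> Ar C \<and> q \<in> Ar C \<and> Cod C p = Dom C (c \<cdot> k) \<and> Cod C q = Dom C d \<and>
        Dom C p = Dom C q \<and> (c \<cdot> k) \<cdot> p = d \<cdot> q"
    have Hp: "p \<in> Ar C" "q \<in> Ar C" "Cod C p = Dom C k" "Cod C q = Dom C d" "Dom C p = Dom C q"
      using H P1 P2 by auto
    have e1: "c \<cdot> (k \<cdot> p) = d \<cdot> q" using H Hp P1 P2 by (simp add: AL)
    obtain u1 where u1: "u1 \<in> Ar C" "Dom C u1 = Dom C (k \<cdot> p)" "Cod C u1 = Dom C a" "a \<cdot> u1 = k \<cdot> p" "b \<cdot> u1 = q"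
      by (rule pb_ex[OF pb1, of "k \<cdot> p" q]) (use Hp P1 P2 e1 in simp_all)
    obtain u where u: "u \<in> Ar C" "Dom C u = Dom C u1" "Cod C u = Dom C e" "e \<cdot> u = u1" "m \<cdot> u = p"
      by (rule pb_ex[OF pb2, of u1 p]) (use Hp P1 P2 u1 in simp_all)
    have bu: "(b \<cdot> e) \<cdot> u = q" using u u1 P1 P2 by (simp add: AR)
    show "\<exists>!ua. arr C ua (Dom C p) (Dom C m) \<and> m \<cdot> ua = p \<and> (b \<cdot> e) \<cdot> ua = q"
    proof (rule ex1I[of _ u])
      show "arr C u (Dom C p) (Dom C m) \<and> m \<cdot> u = p \<and> (b \<cdot> e) \<cdot> u = q"
        using u u1 bu Hp P1 P2 by (simp add: arr_def)
    next
      fix u'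
      assume U: "arr C u' (Dom C p) (Dom C m) \<and> m \<cdot> u' = p \<and> (b \<cdot> e) \<cdot> u' = q"
      have U': "u' \<in> Ar C" "Dom C u' = Dom C p" "Cod C u' = Dom C e" "m \<cdot> u' = p" "(b \<cdot> e) \<cdot> u' = q"
        using U P2 by (auto simp: arr_def)
      have "a \<cdot> (e \<cdot> u') = k \<cdot> p"
      proof -
        have "a \<cdot> (e \<cdot> u') = (a \<cdot> e) \<cdot> u'" using U' P2 by (simp add: AL)
        also have "\<dots> = (k \<cdot> m) \<cdot> u'" using P2 by simp
        also have "\<dots> = k \<cdot> (m \<cdot> u')" using U' P2 by (simp add: AR)
        finally show ?thesis using U' by simp
      qed
      moreover have "b \<cdot> (e \<cdot> u') = q" using U' P1 P2 by (simp add: AL)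
      ultimately have "e \<cdot> u' = u1"
        using pb_uniq[OF pb1, of "e \<cdot> u'" u1] U' u1 P1 P2 Hp by simp
      then show "u' = u"
        using pb_uniq[OF pb2, of u' u] U' u u1 P1 P2 Hp by simp
    qed
  qed (use P1 P2 sq in simp_all)
qed

lemma cancel:
  assumes pb2: "pullback C c d a b" and outer: "pullback C (c \<cdot> k) d e (b \<cdot> m)"
    and k: "k \<in> Ar C" "Cod C k = Dom C c" and m: "m \<in> Ar C" "Cod C m = Dom C b"
    and sq: "k \<cdot> e = a \<cdot> m"
  shows "pullback C k a e m"
proof -
  note P = pbD[OF pb2] and O = pbD[OF outer]
  have O': "Cod C e = Dom C k" "Dom C e = Dom C m" using O P k m by auto
  show ?thesis
    unfolding pullback_def
  proof (intro conjI allI impI)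
    fix p q
    assume H: "p \<in> Ar C \<and> q \<in> Ar C \<and> Cod C p = Dom C k \<and> Cod C q = Dom C a \<and>
        Dom C p = Dom C q \<and> k \<cdot> p = a \<cdot> q"
    have Hp: "p \<in> Ar C" "q \<in> Ar C" "Cod C p = Dom C k" "Cod C q = Dom C a" "Dom C p = Dom C q" "k \<cdot> p = a \<cdot> q"
      using H by auto
    have e1: "(c \<cdot> k) \<cdot> p = d \<cdot> (b \<cdot> q)"
    proof -
      have "(c \<cdot> k) \<cdot> p = c \<cdot> (k \<cdot> p)" using Hp P k by (simp add: AR)
      also have "\<dots> = c \<cdot> (a \<cdot> q)" using Hp by simp
      also have "\<dots> = (c \<cdot> a) \<cdot> q" using Hp P by (simp add: AL)
      also have "\<dots> = (d \<cdot> b) \<cdot> q" using P by simp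
      also have "\<dots> = d \<cdot> (b \<cdot> q)" using Hp P by (simp add: AR)
      finally show ?thesis .
    qed
    obtain u where u: "u \<in> Ar C" "Dom C u = Dom C p" "Cod C u = Dom C e" "e \<cdot> u = p" "(b \<cdot> m) \<cdot> u = b \<cdot> q"
      by (rule pb_ex[OF outer, of p "b \<cdot> q"]) (use Hp P k m e1 in simp_all)
    have mu: "m \<cdot> u = q"
    proof -
      have "a \<cdot> (m \<cdot> u) = (a \<cdot> m) \<cdot> u" using u P m O' by (simp add: AL)
      also have "\<dots> = (k \<cdot> e) \<cdot> u" using sq by simp
      also have "\<dots> = k \<cdot> (e \<cdot> u)" using u O k O' by (simp add: AR)
      finally have 1: "a \<cdot> (m \<cdot> u) = a \<cdot> q" using u Hp by simp
      have 2: "b \<cdot> (m \<cdot> u) = b \<cdot> q" using u P m O' by (simp add: AL)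
      show ?thesis using pb_uniq[OF pb2, of "m \<cdot> u" q] 1 2 u P m O' Hp by simp
    qed
    show "\<exists>!ua. arr C ua (Dom C p) (Dom C e) \<and> e \<cdot> ua = p \<and> m \<cdot> ua = q"
    proof (rule ex1I[of _ u])
      show "arr C u (Dom C p) (Dom C e) \<and> e \<cdot> u = p \<and> m \<cdot> u = q"
        using u mu by (simp add: arr_def)
    next
      fix u'
      assume U: "arr C u' (Dom C p) (Dom C e) \<and> e \<cdot> u' = p \<and> m \<cdot> u' = q"
      have U': "u' \<in> Ar C" "Dom C u' = Dom C p" "Cod C u' = Dom C e" "e \<cdot> u' = p" "m \<cdot> u' = q"
        using U by (auto simp: arr_def)
      have "(b \<cdot> m) \<cdot> u' = b \<cdot> q" using U' P m O' by (simp add: AR)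
      then show "u' = u"
        using pb_uniq[OF outer, of u' u] U' u P m O' Hp by simp
    qed
  qed (use P O O' k m sq in simp_all)
qed

lemma vk_use:
  assumes "van_kampen C f g h k"
    "arr C a (Dom C f') (Dom C f)" "arr C b (Cod C f') (Cod C f)"
    "arr C c (Cod C g') (Cod C g)" "arr C d (Cod C h') (Cod C h)"
    "f' \<in> Ar C" "g' \<in> Ar C" "h' \<in> Ar C" "k' \<in> Ar C"
    "Dom C g' = Dom C f'" "Dom C h' = Cod C f'" "Dom C k' = Cod C g'"
    "Cod C k' = Cod C h'"
    "h' \<cdot> f' = k' \<cdot> g'"
    "f \<cdot> a = b \<cdot> f'" "g \<cdot> a = c \<cdot> g'"
    "h \<cdot> b = d \<cdot> h'" "k \<cdot> c = d \<cdot> k'"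
    "pullback C f b a f'" "pullback C g c a g'"
  shows "pushout C f' g' h' k' \<longleftrightarrow> pullback C h d b h' \<and> pullback C k d c k'"
  using assms(1) unfolding van_kampen_def
  apply (elim conjE)
  apply (drule spec[of _ f'], drule spec[of _ g'], drule spec[of _ h'], drule spec[of _ k'],
         drule spec[of _ a], drule spec[of _ b], drule spec[of _ c], drule spec[of _ d])
  using assms(2-) by blast

lemma po_pb:
  assumes adh: "adhesive C" and po: "pushout C f g h k" and mf: "mono C f"
  shows "pullback C h k f g"
proof -
  note P = poD[OF po]
  have vk: "van_kampen C f g h k" using adh po mf unfolding adhesive_def by blast
  let ?A = "Dom C f" and ?D = "Cod C g"
  have pb1: "pullback C f f (Id C ?A) (Id C ?A)"
    unfolding pullback_def
  proof (intro conjI allI impI)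
    fix p q assume H: "p \<in> Ar C \<and> q \<in> Ar C \<and> Cod C p = Dom C f \<and> Cod C q = Dom C f \<and>
        Dom C p = Dom C q \<and> f \<cdot> p = f \<cdot> q"
    then have "p = q" using mono_cancel[OF mf, of p q] by simp
    then show "\<exists>!u. arr C u (Dom C p) (Dom C (Id C ?A)) \<and> Id C ?A \<cdot> u = p \<and> Id C ?A \<cdot> u = q"
      using H P by (intro ex1I[of _ p]) (auto simp: arr_def)
  qed (use P in simp_all)
  have pb2: "pullback C g (Id C ?D) (Id C ?A) g"
    unfolding pullback_def
  proof (intro conjI allI impI)
    fix p q assume H: "p \<in> Ar C \<and> q \<in> Ar C \<and> Cod C p = Dom C g \<and> Cod C q = Dom C (Id C ?D) \<and>
        Dom C p = Dom C q \<and> g \<cdot> p = Id C ?D \<cdot> q"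
    then have "g \<cdot> p = q" using P by simp
    then show "\<exists>!u. arr C u (Dom C p) (Dom C (Id C ?A)) \<and> Id C ?A \<cdot> u = p \<and> g \<cdot> u = q"
      using H P by (intro ex1I[of _ p]) (auto simp: arr_def)
  qed (use P in simp_all)
  have po2: "pushout C (Id C ?A) g g (Id C ?D)"
    unfolding pushout_def
  proof (intro conjI allI impI)
    fix p q assume H: "p \<in> Ar C \<and> q \<in> Ar C \<and> Dom C p = Cod C (Id C ?A) \<and> Dom C q = Cod C g \<and>
        Cod C p = Cod C q \<and> p \<cdot> Id C ?A = q \<cdot> g"
    have hp0: "p \<in> Ar C" "Dom C p = Cod C (Id C ?A)" "p \<cdot> Id C ?A = q \<cdot> g" using H by blast+
    have "Cod C (Id C ?A) = ?A" using P by simp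
    then have hp: "p \<in> Ar C" "Dom C p = ?A" "p \<cdot> Id C ?A = q \<cdot> g" using hp0 by simp_all
    have i: "p \<cdot> Id C ?A = p" by (rule comp_id_r) (use hp in blast)+
    have "p = q \<cdot> g" using trans[OF sym[OF i] hp(3)] .
    then have pq: "q \<cdot> g = p" by simp
    have hq: "q \<in> Ar C" "Dom C q = ?D" "Cod C p = Cod C q" using H by blast+
    have iq: "q \<cdot> Id C ?D = q" by (rule comp_id_r) (use hq in blast)+
    show "\<exists>!u. arr C u (Cod C g) (Cod C p) \<and> u \<cdot> g = p \<and> u \<cdot> Id C ?D = q"
    proof (rule ex1I[of _ q])
      show "arr C q (Cod C g) (Cod C p) \<and> q \<cdot> g = p \<and> q \<cdot> Id C ?D = q"
        using hq hq(3)[symmetric] pq iq unfolding arr_def by blast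
    next
      fix u assume U: "arr C u (Cod C g) (Cod C p) \<and> u \<cdot> g = p \<and> u \<cdot> Id C ?D = q"
      have "u \<cdot> Id C ?D = u" by (rule comp_id_r) (use U in \<open>auto simp: arr_def\<close>)
      then show "u = q" using U by simp
    qed
  qed (use P in simp_all)
  have "pushout C (Id C ?A) g g (Id C ?D) \<longleftrightarrow> pullback C h k f g \<and> pullback C k k (Id C ?D) (Id C ?D)"
    by (rule vk_use[OF vk]) (use P pb1 pb2 in \<open>simp_all add: arr_def\<close>)
  then show ?thesis using po2 by blast
qed

end

context cat begin

lemma pb_exists: "has_pullbacks C \<Longrightarrow> c \<in> Ar C \<Longrightarrow> d \<in> Ar C \<Longrightarrow> Cod C c = Cod C d \<Longrightarrow>
  \<exists>a b. pullback C c d a b"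
  unfolding has_pullbacks_def by blast

lemma cover:
  assumes adh: "adhesive C" and po: "pushout C z w' w y" and mz: "mono C z"
    and g: "g \<in> Ar C" "Cod C g = Cod C w"
  obtains f' g' t1 t2 a1 a2 where "pushout C f' g' t1 t2" "Cod C t1 = Dom C g"
    "a1 \<in> Ar C" "Dom C a1 = Dom C t1" "Cod C a1 = Dom C w"
    "a2 \<in> Ar C" "Dom C a2 = Dom C t2" "Cod C a2 = Dom C y"
    "g \<cdot> t1 = w \<cdot> a1" "g \<cdot> t2 = y \<cdot> a2"
proof -
  note P = poD[OF po]
  have vk: "van_kampen C z w' w y" using adh po mz unfolding adhesive_def by blast
  have hp: "has_pullbacks C" using adh unfolding adhesive_def by blast
  obtain a1 t1 where pb1: "pullback C w g a1 t1" using pb_exists[OF hp, of w g] P g by auto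
  obtain a2 t2 where pb2: "pullback C y g a2 t2" using pb_exists[OF hp, of y g] P g by auto
  note B1 = pbD[OF pb1] and B2 = pbD[OF pb2]
  obtain a f' where pb0: "pullback C z a1 a f'" using pb_exists[OF hp, of z a1] P B1 by auto
  note B0 = pbD[OF pb0]
  have e: "y \<cdot> (w' \<cdot> a) = g \<cdot> (t1 \<cdot> f')"
  proof -
    have "y \<cdot> (w' \<cdot> a) = (y \<cdot> w') \<cdot> a" by (rule AL) (use P B0 in simp_all)
    also have "\<dots> = (w \<cdot> z) \<cdot> a" using P by simp
    also have "\<dots> = w \<cdot> (z \<cdot> a)" by (rule AR) (use P B0 in simp_all)
    also have "\<dots> = w \<cdot> (a1 \<cdot> f')" using B0 by simp
    also have "\<dots> = (w \<cdot> a1) \<cdot> f'" by (rule AL) (use B1 B0 in simp_all)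
    also have "\<dots> = (g \<cdot> t1) \<cdot> f'" using B1 by simp
    also have "\<dots> = g \<cdot> (t1 \<cdot> f')" by (rule AR) (use B1 B0 in simp_all)
    finally show ?thesis .
  qed
  obtain g' where g': "g' \<in> Ar C" "Dom C g' = Dom C (w' \<cdot> a)" "Cod C g' = Dom C a2"
      "a2 \<cdot> g' = w' \<cdot> a" "t2 \<cdot> g' = t1 \<cdot> f'"
    by (rule pb_ex[OF pb2, of "w' \<cdot> a" "t1 \<cdot> f'"]) (use e P B0 B1 B2 in simp_all)
  have outer0: "pullback C (w \<cdot> z) g a (t1 \<cdot> f')"
    by (rule paste[OF pb1 pb_sym[OF pb0]])
  have outer: "pullback C (y \<cdot> w') g a (t2 \<cdot> g')"
    using outer0 P g' by simp
  have pbw: "pullback C w' a2 a g'"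
    by (rule cancel[OF pb2 outer]) (use P B2 g' in simp_all)
  have "pushout C f' g' t1 t2 \<longleftrightarrow> pullback C w g a1 t1 \<and> pullback C y g a2 t2"
  proof -
    have f1: "arr C a (Dom C f') (Dom C z)" using B0 unfolding arr_def by simp
    have f2: "arr C a1 (Cod C f') (Cod C z)" using B0 B1 P unfolding arr_def by simp
    have f3: "arr C a2 (Cod C g') (Cod C w')" using g' B2 P unfolding arr_def by simp
    have f4: "arr C g (Cod C t1) (Cod C w)" using g B1 unfolding arr_def by simp
    have f5: "Dom C g' = Dom C f'" using g' B0 P by simp
    have f6: "Dom C t1 = Cod C f'" using B0 B1 by simp
    have f7: "Dom C t2 = Cod C g'" using B2 g' by simp
    have f8: "Cod C t2 = Cod C t1" using B1 B2 by simp
    have f9: "t1 \<cdot> f' = t2 \<cdot> g'" using g' by simp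
    have f10: "z \<cdot> a = a1 \<cdot> f'" using B0 by simp
    have f11: "w' \<cdot> a = a2 \<cdot> g'" using g' by simp
    have f12: "w \<cdot> a1 = g \<cdot> t1" using B1 by simp
    have f13: "y \<cdot> a2 = g \<cdot> t2" using B2 by simp
    have ar: "f' \<in> Ar C" "g' \<in> Ar C" "t1 \<in> Ar C" "t2 \<in> Ar C" using B0 B1 B2 g' by simp_all
    show ?thesis
      by (rule vk_use[OF vk f1 f2 f3 f4 ar f5 f6 f7 f8 f9 f10 f11 f12 f13 pb0 pbw])
  qed
  then have "pushout C f' g' t1 t2" using pb1 pb2 by blast
  then show ?thesis by (rule that[of f' g' t1 t2 a1 a2]) (use B1 B2 g in simp_all)
qed

end


lemma fpc_univ:
  assumes "fpc C c a d b"
    "arr C x0 (Dom C x0) (Cod C a)" "arr C y0 (Dom C x0) (Cod C y0)"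
    "arr C z0 (Cod C y0) (Cod C c)" "arr C w0 (Dom C x0) (Dom C a)"
    "pullback C c z0 x0 y0" "Comp C a w0 = x0"
  shows "\<exists>!ws. arr C ws (Cod C y0) (Dom C d) \<and> Comp C d ws = z0 \<and> Comp C ws y0 = Comp C b w0"
  using assms unfolding fpc_def by blast

locale ctx6 = cat C for C :: "('o, 'a) cat" +
  fixes Z' Z Y Y' X X' :: 'o
    and z w w' y v v' x :: 'a
  assumes adh: "adhesive C"
    and az: "arr C z Z' Z" and aw: "arr C w Z Y" and aw': "arr C w' Z' Y'" and ay: "arr C y Y' Y"
    and av: "arr C v Y X" and av': "arr C v' Y' X'" and ax: "arr C x X' X"
    and sq3: "Comp C w z = Comp C y w'"
    and sq4: "Comp C v y = Comp C x v'"
    and mz: "mono C z" and mw: "mono C w" and mw': "mono C w'" and my: "mono C y"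
    and mv': "mono C v'" and mx: "mono C x"
    and mvw: "mono C (Comp C v w)"
    and po3: "pushout C z w' w y"
    and fpcc: "fpc C (Comp C v w) z x (Comp C v' w')"
begin

lemma T [simp]: "z \<in> Ar C" "w \<in> Ar C" "w' \<in> Ar C" "y \<in> Ar C" "v \<in> Ar C" "v' \<in> Ar C" "x \<in> Ar C"
  "Dom C z = Z'" "Cod C z = Z" "Dom C w = Z" "Cod C w = Y" "Dom C w' = Z'" "Cod C w' = Y'"
  "Dom C y = Y'" "Cod C y = Y" "Dom C v = Y" "Cod C v = X" "Dom C v' = Y'" "Cod C v' = X'"
  "Dom C x = X'" "Cod C x = X"
  using az aw aw' ay av av' ax unfolding arr_def by auto

lemma pbc: "pullback C (v \<cdot> w) x z (v' \<cdot> w')"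
  using fpcc unfolding fpc_def by blast

lemma pbc_ex:
  assumes "a1 \<in> Ar C" "Cod C a1 = Z" "q \<in> Ar C" "Cod C q = X'" "Dom C a1 = Dom C q"
    "(v \<cdot> w) \<cdot> a1 = x \<cdot> q"
  obtains c where "c \<in> Ar C" "Dom C c = Dom C a1" "Cod C c = Z'" "z \<cdot> c = a1" "(v' \<cdot> w') \<cdot> c = q"
  by (rule pb_ex[OF pbc, of a1 q]) (use assms in simp_all)

lemma cov:
  assumes "s \<in> Ar C" "Cod C s = Y"
  obtains f' g' t1 t2 a1 a2 where "pushout C f' g' t1 t2" "Cod C t1 = Dom C s"
    "a1 \<in> Ar C" "Dom C a1 = Dom C t1" "Cod C a1 = Z"
    "a2 \<in> Ar C" "Dom C a2 = Dom C t2" "Cod C a2 = Y'"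
    "s \<cdot> t1 = w \<cdot> a1" "s \<cdot> t2 = y \<cdot> a2"
  apply (rule cover[OF adh po3 mz, of s])
  using assms apply simp
  using assms apply simp
  apply (rule that)
  apply simp_all
  done

end

context ctx6 begin

lemma key1:
  assumes s: "s \<in> Ar C" "Cod C s = Y" and b: "b \<in> Ar C" "Cod C b = Z" "Dom C b = Dom C s"
    and e: "v \<cdot> s = v \<cdot> (w \<cdot> b)"
  shows "s = w \<cdot> b"
proof -
  obtain f' g' t1 t2 a1 a2 where po: "pushout C f' g' t1 t2" and tc: "Cod C t1 = Dom C s"
    and a1: "a1 \<in> Ar C" "Dom C a1 = Dom C t1" "Cod C a1 = Z"
    and a2: "a2 \<in> Ar C" "Dom C a2 = Dom C t2" "Cod C a2 = Y'"
    and e1: "s \<cdot> t1 = w \<cdot> a1" and e2: "s \<cdot> t2 = y \<cdot> a2"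
    by (rule cov[OF s])
  have tt: "t1 \<in> Ar C" "t2 \<in> Ar C" "Cod C t2 = Dom C s" "Dom C t1 = Dom C t1" using poD[OF po] tc by auto
  note ty = s b tc tt a1 a2
  have i: "s \<cdot> t1 = (w \<cdot> b) \<cdot> t1"
  proof -
    have "(v \<cdot> w) \<cdot> a1 = v \<cdot> (w \<cdot> a1)" using ty by (simp add: AR)
    also have "\<dots> = v \<cdot> (s \<cdot> t1)" using e1 by simp
    also have "\<dots> = (v \<cdot> s) \<cdot> t1" using ty by (simp add: AL)
    also have "\<dots> = (v \<cdot> (w \<cdot> b)) \<cdot> t1" using e by simp
    also have "\<dots> = (v \<cdot> w) \<cdot> (b \<cdot> t1)" using ty by (simp add: AR)
    finally have q: "(v \<cdot> w) \<cdot> a1 = (v \<cdot> w) \<cdot> (b \<cdot> t1)" .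
    have "a1 = b \<cdot> t1" by (rule mono_cancel[OF mvw _ _ _ _ _ q]) (use ty in simp_all)
    then have "s \<cdot> t1 = w \<cdot> (b \<cdot> t1)" using e1 by simp
    also have "\<dots> = (w \<cdot> b) \<cdot> t1" using ty by (simp add: AL)
    finally show ?thesis .
  qed
  have ii: "s \<cdot> t2 = (w \<cdot> b) \<cdot> t2"
  proof -
    have "(v \<cdot> w) \<cdot> (b \<cdot> t2) = (v \<cdot> (w \<cdot> b)) \<cdot> t2" using ty by (simp add: AR)
    also have "\<dots> = (v \<cdot> s) \<cdot> t2" using e by simp
    also have "\<dots> = v \<cdot> (s \<cdot> t2)" using ty by (simp add: AR)
    also have "\<dots> = v \<cdot> (y \<cdot> a2)" using e2 by simp
    also have "\<dots> = (v \<cdot> y) \<cdot> a2" using ty by (simp add: AL)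
    also have "\<dots> = (x \<cdot> v') \<cdot> a2" using sq4 by simp
    also have "\<dots> = x \<cdot> (v' \<cdot> a2)" using ty by (simp add: AR)
    finally have q: "(v \<cdot> w) \<cdot> (b \<cdot> t2) = x \<cdot> (v' \<cdot> a2)" .
    obtain c where c: "c \<in> Ar C" "Dom C c = Dom C (b \<cdot> t2)" "Cod C c = Z'" 
        and c1: "z \<cdot> c = b \<cdot> t2" and c2: "(v' \<cdot> w') \<cdot> c = v' \<cdot> a2"
      by (rule pbc_ex[of "b \<cdot> t2" "v' \<cdot> a2"]) (use ty q in simp_all)
    have "v' \<cdot> (w' \<cdot> c) = v' \<cdot> a2" using c2 c by (simp add: AL)
    then have wc: "w' \<cdot> c = a2" by (rule mono_cancel[OF mv', rotated -1]) (use ty c in simp_all)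
    have "s \<cdot> t2 = y \<cdot> (w' \<cdot> c)" using e2 wc by simp
    also have "\<dots> = (y \<cdot> w') \<cdot> c" using c by (simp add: AL)
    also have "\<dots> = (w \<cdot> z) \<cdot> c" using sq3 by simp
    also have "\<dots> = w \<cdot> (z \<cdot> c)" using c by (simp add: AR)
    also have "\<dots> = w \<cdot> (b \<cdot> t2)" using c1 by simp
    also have "\<dots> = (w \<cdot> b) \<cdot> t2" using ty by (simp add: AL)
    finally show ?thesis .
  qed
  show ?thesis by (rule po_epi[OF po _ _ _ _ _ i ii]) (use ty in simp_all)
qed

lemma key2:
  assumes s: "s \<in> Ar C" "Cod C s = Y" and b: "b \<in> Ar C" "Cod C b = Y'" "Dom C b = Dom C s"
    and e: "v \<cdot> s = v \<cdot> (y \<cdot> b)"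
  shows "s = y \<cdot> b"
proof -
  obtain f' g' t1 t2 a1 a2 where po: "pushout C f' g' t1 t2" and tc: "Cod C t1 = Dom C s"
    and a1: "a1 \<in> Ar C" "Dom C a1 = Dom C t1" "Cod C a1 = Z"
    and a2: "a2 \<in> Ar C" "Dom C a2 = Dom C t2" "Cod C a2 = Y'"
    and e1: "s \<cdot> t1 = w \<cdot> a1" and e2: "s \<cdot> t2 = y \<cdot> a2"
    by (rule cov[OF s])
  have tt: "t1 \<in> Ar C" "t2 \<in> Ar C" "Cod C t2 = Dom C s" "Dom C t1 = Dom C t1" using poD[OF po] tc by auto
  note ty = s b tc tt a1 a2
  have i: "s \<cdot> t1 = (y \<cdot> b) \<cdot> t1"
  proof -
    have "(v \<cdot> w) \<cdot> a1 = v \<cdot> (w \<cdot> a1)" using ty by (simp add: AR)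
    also have "\<dots> = v \<cdot> (s \<cdot> t1)" using e1 by simp
    also have "\<dots> = (v \<cdot> s) \<cdot> t1" using ty by (simp add: AL)
    also have "\<dots> = (v \<cdot> (y \<cdot> b)) \<cdot> t1" using e by simp
    also have "\<dots> = ((v \<cdot> y) \<cdot> b) \<cdot> t1" using ty by (simp add: AL)
    also have "\<dots> = ((x \<cdot> v') \<cdot> b) \<cdot> t1" using sq4 by simp
    also have "\<dots> = x \<cdot> (v' \<cdot> (b \<cdot> t1))" using ty by (simp add: AR)
    finally have q: "(v \<cdot> w) \<cdot> a1 = x \<cdot> (v' \<cdot> (b \<cdot> t1))" .
    obtain c where c: "c \<in> Ar C" "Dom C c = Dom C a1" "Cod C c = Z'"
        and c1: "z \<cdot> c = a1" and c2: "(v' \<cdot> w') \<cdot> c = v' \<cdot> (b \<cdot> t1)"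
      by (rule pbc_ex[of a1 "v' \<cdot> (b \<cdot> t1)"]) (use ty q in simp_all)
    have "v' \<cdot> (w' \<cdot> c) = v' \<cdot> (b \<cdot> t1)" using c2 c by (simp add: AL)
    then have wc: "w' \<cdot> c = b \<cdot> t1" by (rule mono_cancel[OF mv', rotated -1]) (use ty c in simp_all)
    have "s \<cdot> t1 = w \<cdot> (z \<cdot> c)" using e1 c1 by simp
    also have "\<dots> = (w \<cdot> z) \<cdot> c" using c by (simp add: AL)
    also have "\<dots> = (y \<cdot> w') \<cdot> c" using sq3 by simp
    also have "\<dots> = y \<cdot> (w' \<cdot> c)" using c by (simp add: AR)
    also have "\<dots> = y \<cdot> (b \<cdot> t1)" using wc by simp
    also have "\<dots> = (y \<cdot> b) \<cdot> t1" using ty by (simp add: AL)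
    finally show ?thesis .
  qed
  have ii: "s \<cdot> t2 = (y \<cdot> b) \<cdot> t2"
  proof -
    have "x \<cdot> (v' \<cdot> a2) = (x \<cdot> v') \<cdot> a2" using ty by (simp add: AL)
    also have "\<dots> = (v \<cdot> y) \<cdot> a2" using sq4 by simp
    also have "\<dots> = v \<cdot> (y \<cdot> a2)" using ty by (simp add: AR)
    also have "\<dots> = v \<cdot> (s \<cdot> t2)" using e2 by simp
    also have "\<dots> = (v \<cdot> s) \<cdot> t2" using ty by (simp add: AL)
    also have "\<dots> = (v \<cdot> (y \<cdot> b)) \<cdot> t2" using e by simp
    also have "\<dots> = ((v \<cdot> y) \<cdot> b) \<cdot> t2" using ty by (simp add: AL)
    also have "\<dots> = ((x \<cdot> v') \<cdot> b) \<cdot> t2" using sq4 by simp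
    also have "\<dots> = x \<cdot> (v' \<cdot> (b \<cdot> t2))" using ty by (simp add: AR)
    finally have q: "x \<cdot> (v' \<cdot> a2) = x \<cdot> (v' \<cdot> (b \<cdot> t2))" .
    have q2: "v' \<cdot> a2 = v' \<cdot> (b \<cdot> t2)" by (rule mono_cancel[OF mx _ _ _ _ _ q]) (use ty in simp_all)
    have "a2 = b \<cdot> t2" by (rule mono_cancel[OF mv' _ _ _ _ _ q2]) (use ty in simp_all)
    then have "s \<cdot> t2 = y \<cdot> (b \<cdot> t2)" using e2 by simp
    also have "\<dots> = (y \<cdot> b) \<cdot> t2" using ty by (simp add: AL)
    finally show ?thesis .
  qed
  show ?thesis by (rule po_epi[OF po _ _ _ _ _ i ii]) (use ty in simp_all)
qed

lemma mono_v: "mono C v"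
  unfolding mono_def
proof (intro conjI allI impI)
  show "v \<in> Ar C" by simp
  fix g h assume H: "g \<in> Ar C \<and> h \<in> Ar C \<and> Cod C g = Dom C v \<and> Cod C h = Dom C v \<and>
        Dom C g = Dom C h \<and> v \<cdot> g = v \<cdot> h"
  have g: "g \<in> Ar C" "Cod C g = Y" and h: "h \<in> Ar C" "Cod C h = Y" "Dom C h = Dom C g"
    and e: "v \<cdot> g = v \<cdot> h" using H by auto
  obtain f' g' t1 t2 a1 a2 where po: "pushout C f' g' t1 t2" and tc: "Cod C t1 = Dom C g"
    and a1: "a1 \<in> Ar C" "Dom C a1 = Dom C t1" "Cod C a1 = Z"
    and a2: "a2 \<in> Ar C" "Dom C a2 = Dom C t2" "Cod C a2 = Y'"
    and e1: "g \<cdot> t1 = w \<cdot> a1" and e2: "g \<cdot> t2 = y \<cdot> a2"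
    by (rule cov[OF g])
  have tt: "t1 \<in> Ar C" "t2 \<in> Ar C" "Cod C t2 = Dom C g" using poD[OF po] tc by auto
  note ty = g h tc tt a1 a2
  have i: "h \<cdot> t1 = g \<cdot> t1"
  proof -
    have "v \<cdot> (h \<cdot> t1) = (v \<cdot> h) \<cdot> t1" using ty by (simp add: AL)
    also have "\<dots> = (v \<cdot> g) \<cdot> t1" using e by simp
    also have "\<dots> = v \<cdot> (g \<cdot> t1)" using ty by (simp add: AR)
    also have "\<dots> = v \<cdot> (w \<cdot> a1)" using e1 by simp
    finally have "h \<cdot> t1 = w \<cdot> a1" by (rule key1[rotated -1]) (use ty in simp_all)
    then show ?thesis using e1 by simp
  qed
  have ii: "h \<cdot> t2 = g \<cdot> t2"
  proof -
    have "v \<cdot> (h \<cdot> t2) = (v \<cdot> h) \<cdot> t2" using ty by (simp add: AL)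
    also have "\<dots> = (v \<cdot> g) \<cdot> t2" using e by simp
    also have "\<dots> = v \<cdot> (g \<cdot> t2)" using ty by (simp add: AR)
    also have "\<dots> = v \<cdot> (y \<cdot> a2)" using e2 by simp
    finally have "h \<cdot> t2 = y \<cdot> a2" by (rule key2[rotated -1]) (use ty in simp_all)
    then show ?thesis using e2 by simp
  qed
  show "g = h" by (rule po_epi[OF po _ _ _ _ _ i[symmetric] ii[symmetric]]) (use ty in simp_all)
qed


lemma pb4: "pullback C v x y v'"
  unfolding pullback_def
proof (intro conjI allI impI)
  fix p q assume H: "p \<in> Ar C \<and> q \<in> Ar C \<and> Cod C p = Dom C v \<and> Cod C q = Dom C x \<and>
        Dom C p = Dom C q \<and> v \<cdot> p = x \<cdot> q"
  have p: "p \<in> Ar C" "Cod C p = Y" and qq: "q \<in> Ar C" "Cod C q = X'" "Dom C q = Dom C p"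
    and e: "v \<cdot> p = x \<cdot> q" using H by auto
  obtain f' g' t1 t2 a1 a2 where po: "pushout C f' g' t1 t2" and tc: "Cod C t1 = Dom C p"
    and a1: "a1 \<in> Ar C" "Dom C a1 = Dom C t1" "Cod C a1 = Z"
    and a2: "a2 \<in> Ar C" "Dom C a2 = Dom C t2" "Cod C a2 = Y'"
    and e1: "p \<cdot> t1 = w \<cdot> a1" and e2: "p \<cdot> t2 = y \<cdot> a2"
    by (rule cov[OF p])
  have tt: "t1 \<in> Ar C" "t2 \<in> Ar C" "Cod C t2 = Dom C p" "f' \<in> Ar C" "g' \<in> Ar C"
    "Cod C f' = Dom C t1" "Cod C g' = Dom C t2" "Dom C f' = Dom C g'" using poD[OF po] tc by auto
  have sq: "t1 \<cdot> f' = t2 \<cdot> g'" using poD[OF po] by simp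
  note ty = p qq tc tt a1 a2
  have q1: "(v \<cdot> w) \<cdot> a1 = x \<cdot> (q \<cdot> t1)"
  proof -
    have "(v \<cdot> w) \<cdot> a1 = v \<cdot> (w \<cdot> a1)" using ty by (simp add: AR)
    also have "\<dots> = v \<cdot> (p \<cdot> t1)" using e1 by simp
    also have "\<dots> = (v \<cdot> p) \<cdot> t1" using ty by (simp add: AL)
    also have "\<dots> = (x \<cdot> q) \<cdot> t1" using e by simp
    also have "\<dots> = x \<cdot> (q \<cdot> t1)" using ty by (simp add: AR)
    finally show ?thesis .
  qed
  obtain c1 where c1: "c1 \<in> Ar C" "Dom C c1 = Dom C a1" "Cod C c1 = Z'"
      and c1a: "z \<cdot> c1 = a1" and c1b: "(v' \<cdot> w') \<cdot> c1 = q \<cdot> t1"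
    by (rule pbc_ex[of a1 "q \<cdot> t1"]) (use ty q1 in simp_all)
  note ty = ty c1
  have va2: "v' \<cdot> a2 = q \<cdot> t2"
  proof -
    have "x \<cdot> (v' \<cdot> a2) = (x \<cdot> v') \<cdot> a2" using ty by (simp add: AL)
    also have "\<dots> = (v \<cdot> y) \<cdot> a2" using sq4 by simp
    also have "\<dots> = v \<cdot> (y \<cdot> a2)" using ty by (simp add: AR)
    also have "\<dots> = v \<cdot> (p \<cdot> t2)" using e2 by simp
    also have "\<dots> = (v \<cdot> p) \<cdot> t2" using ty by (simp add: AL)
    also have "\<dots> = (x \<cdot> q) \<cdot> t2" using e by simp
    also have "\<dots> = x \<cdot> (q \<cdot> t2)" using ty by (simp add: AR)
    finally have q: "x \<cdot> (v' \<cdot> a2) = x \<cdot> (q \<cdot> t2)" .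
    show ?thesis by (rule mono_cancel[OF mx _ _ _ _ _ q]) (use ty in simp_all)
  qed
  have yc: "y \<cdot> (w' \<cdot> c1) = w \<cdot> a1"
  proof -
    have "y \<cdot> (w' \<cdot> c1) = (y \<cdot> w') \<cdot> c1" using ty by (simp add: AL)
    also have "\<dots> = (w \<cdot> z) \<cdot> c1" using sq3 by simp
    also have "\<dots> = w \<cdot> (z \<cdot> c1)" using ty by (simp add: AR)
    finally show ?thesis using c1a by simp
  qed
  have glue: "(w' \<cdot> c1) \<cdot> f' = a2 \<cdot> g'"
  proof -
    have "y \<cdot> ((w' \<cdot> c1) \<cdot> f') = (y \<cdot> (w' \<cdot> c1)) \<cdot> f'" using ty by (simp add: AL)
    also have "\<dots> = (p \<cdot> t1) \<cdot> f'" using yc e1 by simp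
    also have "\<dots> = p \<cdot> (t1 \<cdot> f')" using ty by (simp add: AR)
    also have "\<dots> = p \<cdot> (t2 \<cdot> g')" using sq by simp
    also have "\<dots> = (p \<cdot> t2) \<cdot> g'" using ty by (simp add: AL)
    also have "\<dots> = (y \<cdot> a2) \<cdot> g'" using e2 by simp
    also have "\<dots> = y \<cdot> (a2 \<cdot> g')" using ty by (simp add: AR)
    finally have q: "y \<cdot> ((w' \<cdot> c1) \<cdot> f') = y \<cdot> (a2 \<cdot> g')" .
    show ?thesis by (rule mono_cancel[OF my _ _ _ _ _ q]) (use ty in simp_all)
  qed
  obtain u where u: "u \<in> Ar C" "Dom C u = Cod C t1" "Cod C u = Cod C (w' \<cdot> c1)"
      and u1: "u \<cdot> t1 = w' \<cdot> c1" and u2: "u \<cdot> t2 = a2"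
    by (rule po_ex[OF po, of "w' \<cdot> c1" a2]) (use ty glue in simp_all)
  have u': "Dom C u = Dom C p" "Cod C u = Y'" using u ty by simp_all
  note ty = ty u(1) u'
  have yu: "y \<cdot> u = p"
  proof (rule po_epi[OF po])
    show "(y \<cdot> u) \<cdot> t1 = p \<cdot> t1" using yc e1 u1 ty by (simp add: AR)
    show "(y \<cdot> u) \<cdot> t2 = p \<cdot> t2" using e2 u2 ty by (simp add: AR)
  qed (use ty in simp_all)
  have vu: "v' \<cdot> u = q"
  proof (rule po_epi[OF po])
    have "(v' \<cdot> u) \<cdot> t1 = v' \<cdot> (w' \<cdot> c1)" using u1 ty by (simp add: AR)
    also have "\<dots> = (v' \<cdot> w') \<cdot> c1" using ty by (simp add: AL)
    finally show "(v' \<cdot> u) \<cdot> t1 = q \<cdot> t1" using c1b by simp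
    show "(v' \<cdot> u) \<cdot> t2 = q \<cdot> t2" using va2 u2 ty by (simp add: AR)
  qed (use ty in simp_all)
  show "\<exists>!u. arr C u (Dom C p) (Dom C y) \<and> y \<cdot> u = p \<and> v' \<cdot> u = q"
  proof (rule ex1I[of _ u])
    show "arr C u (Dom C p) (Dom C y) \<and> y \<cdot> u = p \<and> v' \<cdot> u = q"
      using ty yu vu unfolding arr_def by simp
  next
    fix u2 assume U: "arr C u2 (Dom C p) (Dom C y) \<and> y \<cdot> u2 = p \<and> v' \<cdot> u2 = q"
    then have U': "u2 \<in> Ar C" "Dom C u2 = Dom C p" "Cod C u2 = Y'" "y \<cdot> u2 = y \<cdot> u"
      using yu unfolding arr_def by auto
    show "u2 = u" by (rule mono_cancel[OF my _ _ _ _ _ U'(4)]) (use U' ty in simp_all)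
  qed
qed (simp_all add: sq4)

lemma fpc4: "fpc C v y x v'"
  unfolding fpc_def
proof (intro conjI allI impI)
  show "pullback C v x y v'" by (rule pb4)
  fix x0 y0 z0 w0
  assume H: "arr C x0 (Dom C x0) (Cod C y) \<and> arr C y0 (Dom C x0) (Cod C y0) \<and>
        arr C z0 (Cod C y0) (Cod C v) \<and> arr C w0 (Dom C x0) (Dom C y) \<and>
        pullback C v z0 x0 y0 \<and> y \<cdot> w0 = x0"
  have x0: "x0 \<in> Ar C" "Cod C x0 = Y" and y0: "y0 \<in> Ar C" "Dom C y0 = Dom C x0"
    and z0: "z0 \<in> Ar C" "Dom C z0 = Cod C y0" "Cod C z0 = X"
    and w0: "w0 \<in> Ar C" "Dom C w0 = Dom C x0" "Cod C w0 = Y'"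
    and pbE: "pullback C v z0 x0 y0" and ew: "y \<cdot> w0 = x0"
    using H unfolding arr_def by auto
  have hp: "has_pullbacks C" using adh unfolding adhesive_def by blast
  obtain e x0' where pbe: "pullback C x0 w e x0'" using pb_exists[OF hp, of x0 w] x0 by auto
  note E = pbD[OF pbe]
  have Et: "e \<in> Ar C" "x0' \<in> Ar C" "Cod C e = Dom C x0" "Cod C x0' = Z" "Dom C e = Dom C x0'"
    using E by auto
  have pb3: "pullback C w y z w'" by (rule po_pb[OF adh po3 mz])
  note ty = x0 y0 z0 w0 Et
  have q: "w \<cdot> x0' = y \<cdot> (w0 \<cdot> e)"
  proof -
    have "w \<cdot> x0' = x0 \<cdot> e" using E by simp
    also have "\<dots> = (y \<cdot> w0) \<cdot> e" using ew by simp
    also have "\<dots> = y \<cdot> (w0 \<cdot> e)" using ty by (simp add: AR)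
    finally show ?thesis .
  qed
  obtain w0' where w0': "w0' \<in> Ar C" "Dom C w0' = Dom C x0'" "Cod C w0' = Dom C z"
      and zw: "z \<cdot> w0' = x0'" and "w' \<cdot> w0' = w0 \<cdot> e"
    by (rule pb_ex[OF pb3, of x0' "w0 \<cdot> e"]) (use ty q in simp_all)
  have pbE': "pullback C (v \<cdot> w) z0 x0' (y0 \<cdot> e)" by (rule paste[OF pbE pbe])
  have "\<exists>!ws. arr C ws (Cod C (y0 \<cdot> e)) (Dom C x) \<and> x \<cdot> ws = z0 \<and> ws \<cdot> (y0 \<cdot> e) = (v' \<cdot> w') \<cdot> w0'"
    by (rule fpc_univ[OF fpcc _ _ _ _ pbE' zw]) (use ty w0' in \<open>simp_all add: arr_def\<close>)
  then obtain ws where ws: "arr C ws (Cod C (y0 \<cdot> e)) (Dom C x)" "x \<cdot> ws = z0" by blast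
  have wst: "ws \<in> Ar C" "Dom C ws = Cod C y0" "Cod C ws = X'" using ws(1) ty unfolding arr_def by simp_all
  have wsy: "ws \<cdot> y0 = v' \<cdot> w0"
  proof -
    have "x \<cdot> (ws \<cdot> y0) = (x \<cdot> ws) \<cdot> y0" using ty wst by (simp add: AL)
    also have "\<dots> = z0 \<cdot> y0" using ws by simp
    also have "\<dots> = v \<cdot> x0" using pbD[OF pbE] by simp
    also have "\<dots> = v \<cdot> (y \<cdot> w0)" using ew by simp
    also have "\<dots> = (v \<cdot> y) \<cdot> w0" using ty by (simp add: AL)
    also have "\<dots> = (x \<cdot> v') \<cdot> w0" using sq4 by simp
    also have "\<dots> = x \<cdot> (v' \<cdot> w0)" using ty by (simp add: AR)
    finally have q: "x \<cdot> (ws \<cdot> y0) = x \<cdot> (v' \<cdot> w0)" .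
    show ?thesis by (rule mono_cancel[OF mx _ _ _ _ _ q]) (use ty wst in simp_all)
  qed
  show "\<exists>!ws. arr C ws (Cod C y0) (Dom C x) \<and> x \<cdot> ws = z0 \<and> ws \<cdot> y0 = v' \<cdot> w0"
  proof (rule ex1I[of _ ws])
    show "arr C ws (Cod C y0) (Dom C x) \<and> x \<cdot> ws = z0 \<and> ws \<cdot> y0 = v' \<cdot> w0"
      using wst ws wsy unfolding arr_def by simp
  next
    fix u assume U: "arr C u (Cod C y0) (Dom C x) \<and> x \<cdot> u = z0 \<and> u \<cdot> y0 = v' \<cdot> w0"
    then have U': "u \<in> Ar C" "Dom C u = Cod C y0" "Cod C u = X'" "x \<cdot> u = x \<cdot> ws"
      using ws unfolding arr_def by auto
    show "u = ws" by (rule mono_cancel[OF mx _ _ _ _ _ U'(4)]) (use U' wst in simp_all)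
  qed
qed (simp_all add: sq4)

end

theorem mainTheorem6:
  fixes C :: "('o, 'a) cat"
    and Z' Z Y Y' X X' :: 'o
    and z w w' y v v' x :: 'a
  assumes "adhesive C"
    and "arr C z Z' Z" and "arr C w Z Y" and "arr C w' Z' Y'" and "arr C y Y' Y"
    and "arr C v Y X" and "arr C v' Y' X'" and "arr C x X' X"
    and "Comp C w z = Comp C y w'"
    and "Comp C v y = Comp C x v'"
    and "mono C z" and "mono C w" and "mono C w'" and "mono C y"
    and "mono C v'" and "mono C x"
    and "mono C (Comp C v w)"
    and "pushout C z w' w y"
    and "fpc C (Comp C v w) z x (Comp C v' w')"
  shows "fpc C v y x v' \<and> mono C v"
proof -
  have cat: "category C" using assms(1) unfolding adhesive_def by blast
  interpret ctx6 C Z' Z Y Y' X X' z w w' y v v' x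
    by (rule ctx6.intro[OF cat.intro[OF cat] ctx6_axioms.intro]) (fact assms)+
  show ?thesis using fpc4 mono_v by blast
qed

end
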